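(* In the free group $\mathbb{F}_2$ on $a,b$, set $a_0:=b^{-1}$, $b_0:=aba^{-1}$ and recursively $a_n:=a_{n-1}b_{n-1}$, $b_n:=a_{n-1}^{-1}b_{n-1}^{-1}$ for $n\ge1$. Let $n>0$. Then the reduced words representing $a_n$ and $b_n$ satisfy: if $n\equiv 0\pmod 3$, $a_n$ begins with $b^{-1}$ and ends with $b^{-1}$, and $b_n$ begins with $ab$ and ends with $ba^{-1}$; if $n\equiv 1\pmod 3$, $a_n$ begins with $b^{-1}$ and ends with $ba^{-1}$, and $b_n$ begins with $b$ and ends with $b^{-1}a^{-1}$; if $n\equiv 2\pmod 3$, $a_n$ begins with $b^{-1}$ and ends with $b^{-1}a^{-1}$, and $b_n$ begins with $ab^{-1}$ and ends with $b^{-1}$. Consequently, for all $n\in\mathbb{N}$ there is no cancellation in the product $a_n^{-1}b_n^{-1}$, and the product $a_nb_n$ involves cancellation if and only if $n\equiv 2\pmod 3$, in which case exactly the term $a^{-1}a$ cancels. Hence for $n\in\mathbb{N}$, $$\ell(a_{n+1})=\ell(a_n)+\ell(b_n)-\begin{cases}2 & n\equiv 2\pmod 3\\ 0&\text{otherwise}\end{cases},\qquad \ell(b_{n+1})=\ell(a_n)+\ell(b_n),$$ and $$\ell(a_n)=\begin{cases}\frac{13\cdot 2^n-6}{7}& n\equiv0\pmod 3\\ \frac{13\cdot 2^n+2}{7}& n\equiv1\pmod 3\\ \frac{13\cdot 2^n+4}{7}& n\equiv2\pmod 3\end{cases},\qquad \ell(b_n)=\begin{cases}\frac{13\cdot 2^n+8}{7}&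 n\equiv0\pmod 3\\ \frac{13\cdot 2^n+2}{7}& n\equiv1\pmod 3\\ \frac{13\cdot 2^n+4}{7}& n\equiv2\pmod 3\end{cases}.$$ In particular there is a constant $C'>0$ with $\ell(a_n)\le C'\cdot 2^n$ for all $n$.
   Context: $\ell$ denotes word length in $\mathbb{F}_2$ with respect to $\{a,a^{-1},b,b^{-1}\}$. *)

theory Defs
  imports Complex_Main "HOL-Library.Sublist"
begin

text \<open>The free group F_2 on generators a, b, modelled by freely reduced words.
  A letter is a pair (g, e) with g a generator and e = True meaning the inverse g^-1.\<close>

datatype gen = A | B

type_synonym letter = "gen \<times> bool"
type_synonym word = "letter list"

definition inv_letter :: "letter \<Rightarrow> letter" where
  "inv_letter x = (fst x, \<not> snd x)"

fun push :: "letter \<Rightarrow> word \<Rightarrow> word" where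
  "push x [] = [x]"
| "push x (y # ys) = (if y = inv_letter x then ys else x # y # ys)"

definition reduce :: "word \<Rightarrow> word" where
  "reduce w = foldr push w []"

definition reduced :: "word \<Rightarrow> bool" where
  "reduced w \<longleftrightarrow> (\<forall>i. Suc i < length w \<longrightarrow> w ! Suc i \<noteq> inv_letter (w ! i))"

definition gmult :: "word \<Rightarrow> word \<Rightarrow> word" where
  "gmult u v = reduce (u @ v)"

definition ginv :: "word \<Rightarrow> word" where
  "ginv w = rev (map inv_letter w)"

definition ga :: word where "ga = [(A, False)]"
definition gb :: word where "gb = [(B, False)]"

definition wlen :: "word \<Rightarrow> nat" where
  "wlen w = length (reduce w)"

fun seq_ab :: "nat \<Rightarrow> word \<times> word" where
  "seq_ab 0 = (ginv gb, gmult (gmult ga gb) (ginv ga))"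
| "seq_ab (Suc n) = (gmult (fst (seq_ab n)) (snd (seq_ab n)),
                     gmult (ginv (fst (seq_ab n))) (ginv (snd (seq_ab n))))"

definition an :: "nat \<Rightarrow> word" where "an n = fst (seq_ab n)"
definition bn :: "nat \<Rightarrow> word" where "bn n = snd (seq_ab n)"

end

theory Submission
  imports Defs
begin

fun rd :: "word \<Rightarrow> bool" where
  "rd [] = True" | "rd [x] = True" | "rd (x#y#ys) = (y \<noteq> inv_letter x \<and> rd (y#ys))"

lemma reduced_Cons2: "reduced (x#y#ys) = (y \<noteq> inv_letter x \<and> reduced (y#ys))"
  unfolding reduced_def
  apply (rule iffI)
   apply (intro conjI allI impI)
    apply (metis nth_Cons_0 nth_Cons_Suc zero_less_Suc length_Cons Suc_less_eq)
   apply (metis nth_Cons_Suc length_Cons Suc_less_eq)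
  apply (intro allI impI)
  apply (case_tac i)
   apply simp
  apply simp
  done

lemma reduced_rd: "reduced w = rd w"
  by (induction w rule: rd.induct) (auto simp: reduced_Cons2, auto simp: reduced_def)

lemma rd_Cons: "rd (x#ys) = (rd ys \<and> (ys \<noteq> [] \<longrightarrow> hd ys \<noteq> inv_letter x))"
  by (cases ys) auto

lemma rd_append: "rd (xs@ys) \<longleftrightarrow> rd xs \<and> rd ys \<and> (xs \<noteq> [] \<longrightarrow> ys \<noteq> [] \<longrightarrow> hd ys \<noteq> inv_letter (last xs))"
  by (induction xs) (auto simp: rd_Cons)

lemma inv_inv[simp]: "inv_letter (inv_letter x) = x" by (simp add: inv_letter_def)
lemma inv_eq: "(y = inv_letter x) = (x = inv_letter y)" by (auto simp: inv_letter_def)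

lemma rd_ginv: "rd w \<Longrightarrow> rd (ginv w)"
  apply (induction w rule: rd.induct)
  by (auto simp: ginv_def rd_append)

lemma ginv_append[simp]: "ginv (xs@ys) = ginv ys @ ginv xs" by (simp add: ginv_def)
lemma ginv_Cons[simp]: "ginv (x#xs) = ginv xs @ [inv_letter x]" by (simp add: ginv_def)
lemma ginv_Nil[simp]: "ginv [] = []" by (simp add: ginv_def)

lemma foldr_push: "rd (u@v) \<Longrightarrow> foldr push u v = u@v"
proof (induction u)
  case Nil then show ?case by simp
next
  case (Cons x u)
  have r: "rd (u@v)" using Cons.prems by (cases "u@v") auto
  show ?case using Cons.prems by (cases "u@v") (auto simp: Cons.IH[OF r])
qed

lemma reduce_rd: "rd w \<Longrightarrow> reduce w = w"
  using foldr_push[of w "[]"] by (simp add: reduce_def)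

lemma gmult_noc: "rd (u@v) \<Longrightarrow> gmult u v = u@v"
  using foldr_push[of "u@v" "[]"] by (simp add: gmult_def reduce_def)

lemma gmult_canc: "rd (inv_letter x # v) \<Longrightarrow> rd (u@v) \<Longrightarrow> gmult (u@[x]) (inv_letter x # v) = u@v"
proof -
  assume a: "rd (inv_letter x # v)" and b: "rd (u@v)"
  have "foldr push (inv_letter x # v) [] = inv_letter x # v"
    using foldr_push[of "inv_letter x # v" "[]"] a by simp
  then have "foldr push (u @ [x] @ inv_letter x # v) [] = foldr push u v"
    by simp
  then show ?thesis using foldr_push[OF b] by (simp add: gmult_def reduce_def)
qed

abbreviation "Bi \<equiv> (B,True)"
abbreviation "Bp \<equiv> (B,False)"
abbreviation "Ap \<equiv> (A,False)"
abbreviation "Ai \<equiv> (A,True)"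

definition Inv :: "nat \<Rightarrow> bool" where
"Inv n \<longleftrightarrow> rd (an n) \<and> rd (bn n) \<and>
  (n mod 3 = 0 \<longrightarrow> (\<exists>m m'. an n = [Bi]@m@[Bi] \<and> bn n = [Ap,Bp]@m'@[Bp,Ai])) \<and>
  (n mod 3 = 1 \<longrightarrow> (\<exists>m m'. an n = [Bi]@m@[Bp,Ai] \<and> bn n = [Bp]@m'@[Bi,Ai])) \<and>
  (n mod 3 = 2 \<longrightarrow> (\<exists>m m'. an n = [Bi]@m@[Bi,Ai] \<and> bn n = [Ap,Bi]@m'@[Bi]))"

lemma an_Suc: "an (Suc n) = gmult (an n) (bn n)" by (simp add: an_def bn_def)
lemma bn_Suc: "bn (Suc n) = gmult (ginv (an n)) (ginv (bn n))" by (simp add: an_def bn_def)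

lemma seq1: "an 1 = [Bi,Ap,Bp,Ai] \<and> bn 1 = [Bp,Ap,Bi,Ai]"
  by (simp add: an_def bn_def gmult_def reduce_def ginv_def ga_def gb_def inv_letter_def)

lemma seq0: "an 0 = [Bi] \<and> bn 0 = [Ap,Bp,Ai]"
  by (simp add: an_def bn_def gmult_def reduce_def ginv_def ga_def gb_def inv_letter_def)

lemma Inv1: "Inv (Suc 0)"
  unfolding Inv_def using seq1 by (auto simp: inv_letter_def intro!: exI[of _ "[Ap]"])

lemma Inv_step: assumes "Inv n" shows "Inv (Suc n)"
proof -
  have ra: "rd (an n)" and rb: "rd (bn n)" using assms by (auto simp: Inv_def)
  consider "n mod 3 = 0" | "n mod 3 = 1" | "n mod 3 = 2" by linarith
  then show ?thesis
  proof cases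
    case 1
    then obtain m m' where e: "an n = [Bi]@m@[Bi]" "bn n = [Ap,Bp]@m'@[Bp,Ai]"
      using assms by (auto simp: Inv_def)
    have r1: "rd (an n @ bn n)"
    proof -
      have "last (an n) = Bi" "hd (bn n) = Ap" "an n \<noteq> []" "bn n \<noteq> []" using e by auto
      then show ?thesis using rd_append[of "an n" "bn n"] ra rb by (simp add: inv_letter_def)
    qed
    have r2: "rd (ginv (an n) @ ginv (bn n))"
    proof -
      have "last (ginv (an n)) = Bp" "hd (ginv (bn n)) = Ap" "ginv (an n) \<noteq> []" "ginv (bn n) \<noteq> []"
        using e by (auto simp: inv_letter_def)
      then show ?thesis using rd_append[of "ginv (an n)" "ginv (bn n)"] rd_ginv[OF ra] rd_ginv[OF rb]
        by (simp add: inv_letter_def)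
    qed
    have s: "Suc n mod 3 = 1" using 1 by (simp add: mod_Suc)
    show ?thesis unfolding Inv_def an_Suc bn_Suc gmult_noc[OF r1] gmult_noc[OF r2]
      using r1 r2 s e by (simp add: inv_letter_def)
  next
    case 2
    then obtain m m' where e: "an n = [Bi]@m@[Bp,Ai]" "bn n = [Bp]@m'@[Bi,Ai]"
      using assms by (auto simp: Inv_def)
    have r1: "rd (an n @ bn n)"
    proof -
      have "last (an n) = Ai" "hd (bn n) = Bp" "an n \<noteq> []" "bn n \<noteq> []" using e by auto
      then show ?thesis using rd_append[of "an n" "bn n"] ra rb by (simp add: inv_letter_def)
    qed
    have r2: "rd (ginv (an n) @ ginv (bn n))"
    proof -
      have "last (ginv (an n)) = Bp" "hd (ginv (bn n)) = Ap" "ginv (an n) \<noteq> []" "ginv (bn n) \<noteq> []"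
        using e by (auto simp: inv_letter_def)
      then show ?thesis using rd_append[of "ginv (an n)" "ginv (bn n)"] rd_ginv[OF ra] rd_ginv[OF rb]
        by (simp add: inv_letter_def)
    qed
    have s: "Suc n mod 3 = 2" using 2 by (simp add: mod_Suc)
    show ?thesis unfolding Inv_def an_Suc bn_Suc gmult_noc[OF r1] gmult_noc[OF r2]
      using r1 r2 s e by (simp add: inv_letter_def)
  next
    case 3
    then obtain m m' where e: "an n = [Bi]@m@[Bi,Ai]" "bn n = [Ap,Bi]@m'@[Bi]"
      using assms by (auto simp: Inv_def)
    have r1: "rd (([Bi]@m@[Bi]) @ ([Bi]@m'@[Bi]))"
    proof -
      have "rd ([Bi]@m@[Bi])" using ra e rd_append[of "[Bi]@m@[Bi]" "[Ai]"] by simp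
      moreover have "rd ([Bi]@m'@[Bi])" using rb e rd_append[of "[Ap]" "[Bi]@m'@[Bi]"] by simp
      ultimately show ?thesis by (subst rd_append) (simp add: inv_letter_def)
    qed
    have rv: "rd (inv_letter Ai # ([Bi]@m'@[Bi]))" using rb e by (simp add: inv_letter_def)
    have g: "gmult (an n) (bn n) = ([Bi]@m@[Bi]) @ ([Bi]@m'@[Bi])"
    proof -
      have "an n = ([Bi]@m@[Bi]) @ [Ai]" "bn n = inv_letter Ai # ([Bi]@m'@[Bi])"
        using e by (auto simp: inv_letter_def)
      then show ?thesis using gmult_canc[OF rv r1] by simp
    qed
    have r2: "rd (ginv (an n) @ ginv (bn n))"
    proof -
      have "last (ginv (an n)) = Bp" "hd (ginv (bn n)) = Bp" "ginv (an n) \<noteq> []" "ginv (bn n) \<noteq> []"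
        using e by (auto simp: inv_letter_def)
      then show ?thesis using rd_append[of "ginv (an n)" "ginv (bn n)"] rd_ginv[OF ra] rd_ginv[OF rb]
        by (simp add: inv_letter_def)
    qed
    have s: "Suc n mod 3 = 0" using 3 by (simp add: mod_Suc)
    show ?thesis unfolding Inv_def an_Suc bn_Suc g gmult_noc[OF r2]
      using r1 r2 s e by (simp add: inv_letter_def)
  qed
qed

lemma J_step: assumes "Inv n" shows "rd (ginv (an n) @ ginv (bn n)) \<and> (n mod 3 \<noteq> 2 \<longrightarrow> rd (an n @ bn n)) \<and> (n mod 3 = 2 \<longrightarrow> last (an n) = Ai \<and> hd (bn n) = Ap \<and> gmult (an n) (bn n) = butlast (an n) @ tl (bn n) \<and> length (an n) \<ge> 2 \<and> length (bn n) \<ge> 2)"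
proof -
  have ra: "rd (an n)" and rb: "rd (bn n)" using assms by (auto simp: Inv_def)
  consider "n mod 3 = 0" | "n mod 3 = 1" | "n mod 3 = 2" by linarith
  then show ?thesis
  proof cases
    case 1
    then obtain m m' where e: "an n = [Bi]@m@[Bi]" "bn n = [Ap,Bp]@m'@[Bp,Ai]"
      using assms by (auto simp: Inv_def)
    have r1: "rd (an n @ bn n)"
    proof -
      have "last (an n) = Bi" "hd (bn n) = Ap" "an n \<noteq> []" "bn n \<noteq> []" using e by auto
      then show ?thesis using rd_append[of "an n" "bn n"] ra rb by (simp add: inv_letter_def)
    qed
    have r2: "rd (ginv (an n) @ ginv (bn n))"
    proof -
      have "last (ginv (an n)) = Bp" "hd (ginv (bn n)) = Ap" "ginv (an n) \<noteq> []" "ginv (bn n) \<noteq> []"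
        using e by (auto simp: inv_letter_def)
      then show ?thesis using rd_append[of "ginv (an n)" "ginv (bn n)"] rd_ginv[OF ra] rd_ginv[OF rb]
        by (simp add: inv_letter_def)
    qed
    have s: "Suc n mod 3 = 1" using 1 by (simp add: mod_Suc)
    show ?thesis using r1 r2 1 by simp
  next
    case 2
    then obtain m m' where e: "an n = [Bi]@m@[Bp,Ai]" "bn n = [Bp]@m'@[Bi,Ai]"
      using assms by (auto simp: Inv_def)
    have r1: "rd (an n @ bn n)"
    proof -
      have "last (an n) = Ai" "hd (bn n) = Bp" "an n \<noteq> []" "bn n \<noteq> []" using e by auto
      then show ?thesis using rd_append[of "an n" "bn n"] ra rb by (simp add: inv_letter_def)
    qed
    have r2: "rd (ginv (an n) @ ginv (bn n))"
    proof -
      have "last (ginv (an n)) = Bp" "hd (ginv (bn n)) = Ap" "ginv (an n) \<noteq> []" "ginv (bn n) \<noteq> []"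
        using e by (auto simp: inv_letter_def)
      then show ?thesis using rd_append[of "ginv (an n)" "ginv (bn n)"] rd_ginv[OF ra] rd_ginv[OF rb]
        by (simp add: inv_letter_def)
    qed
    have s: "Suc n mod 3 = 2" using 2 by (simp add: mod_Suc)
    show ?thesis using r1 r2 2 by simp
  next
    case 3
    then obtain m m' where e: "an n = [Bi]@m@[Bi,Ai]" "bn n = [Ap,Bi]@m'@[Bi]"
      using assms by (auto simp: Inv_def)
    have r1: "rd (([Bi]@m@[Bi]) @ ([Bi]@m'@[Bi]))"
    proof -
      have "rd ([Bi]@m@[Bi])" using ra e rd_append[of "[Bi]@m@[Bi]" "[Ai]"] by simp
      moreover have "rd ([Bi]@m'@[Bi])" using rb e rd_append[of "[Ap]" "[Bi]@m'@[Bi]"] by simp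
      ultimately show ?thesis by (subst rd_append) (simp add: inv_letter_def)
    qed
    have rv: "rd (inv_letter Ai # ([Bi]@m'@[Bi]))" using rb e by (simp add: inv_letter_def)
    have g: "gmult (an n) (bn n) = ([Bi]@m@[Bi]) @ ([Bi]@m'@[Bi])"
    proof -
      have "an n = ([Bi]@m@[Bi]) @ [Ai]" "bn n = inv_letter Ai # ([Bi]@m'@[Bi])"
        using e by (auto simp: inv_letter_def)
      then show ?thesis using gmult_canc[OF rv r1] by simp
    qed
    have r2: "rd (ginv (an n) @ ginv (bn n))"
    proof -
      have "last (ginv (an n)) = Bp" "hd (ginv (bn n)) = Bp" "ginv (an n) \<noteq> []" "ginv (bn n) \<noteq> []"
        using e by (auto simp: inv_letter_def)
      then show ?thesis using rd_append[of "ginv (an n)" "ginv (bn n)"] rd_ginv[OF ra] rd_ginv[OF rb]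
        by (simp add: inv_letter_def)
    qed
    have s: "Suc n mod 3 = 0" using 3 by (simp add: mod_Suc)
    have "butlast (an n) @ tl (bn n) = ([Bi]@m@[Bi]) @ ([Bi]@m'@[Bi])" using e by (simp add: butlast_append)
    then show ?thesis using r2 g 3 e by simp
  qed
qed

lemma Inv_all: "n \<ge> 1 \<Longrightarrow> Inv n"
  by (induction n rule: dec_induct) (auto simp: Inv1 Inv_step)

lemma G_all: "rd (an n) \<and> rd (bn n) \<and> rd (ginv (an n) @ ginv (bn n)) \<and> (n mod 3 \<noteq> 2 \<longrightarrow> rd (an n @ bn n)) \<and> (n mod 3 = 2 \<longrightarrow> last (an n) = Ai \<and> hd (bn n) = Ap \<and> gmult (an n) (bn n) = butlast (an n) @ tl (bn n) \<and> length (an n) \<ge> 2 \<and> length (bn n) \<ge> 2)"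
proof (cases "n = 0")
  case True then show ?thesis using seq0 by (simp add: inv_letter_def)
next
  case False
  then have "Inv n" using Inv_all by simp
  then show ?thesis using J_step[of n] by (simp add: Inv_def)
qed

lemma wlen_an: "wlen (an n) = length (an n)" using G_all[of n] by (simp add: wlen_def reduce_rd)
lemma wlen_bn: "wlen (bn n) = length (bn n)" using G_all[of n] by (simp add: wlen_def reduce_rd)

lemma rec_len: "wlen (an (Suc n)) = wlen (an n) + wlen (bn n) - (if n mod 3 = 2 then 2 else 0)
          \<and> wlen (bn (Suc n)) = wlen (an n) + wlen (bn n)"
proof -
  have g: "rd (ginv (an n) @ ginv (bn n))" using G_all[of n] by simp
  have b: "wlen (bn (Suc n)) = wlen (an n) + wlen (bn n)"
    using wlen_bn[of "Suc n"] wlen_an[of n] wlen_bn[of n] unfolding bn_Suc gmult_noc[OF g] by (simp add: ginv_def)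
  have a: "wlen (an (Suc n)) = wlen (an n) + wlen (bn n) - (if n mod 3 = 2 then 2 else 0)"
  proof (cases "n mod 3 = 2")
    case True
    then show ?thesis using G_all[of n] wlen_an[of "Suc n"] wlen_an[of n] wlen_bn[of n] unfolding an_Suc by simp
  next
    case False
    then have "rd (an n @ bn n)" using G_all[of n] by simp
    then show ?thesis using False wlen_an[of "Suc n"] wlen_an[of n] wlen_bn[of n] unfolding an_Suc gmult_noc[OF \<open>rd (an n @ bn n)\<close>] by simp
  qed
  show ?thesis using a b by simp
qed

lemma closed: "7 * int (wlen (an n)) =
          (if n mod 3 = 0 then 13 * 2^n - 6 else if n mod 3 = 1 then 13 * 2^n + 2 else 13 * 2^n + 4)
        \<and> 7 * int (wlen (bn n)) =
          (if n mod 3 = 0 then 13 * 2^n + 8 else if n mod 3 = 1 then 13 * 2^n + 2 else 13 * 2^n + 4)"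
proof (induction n)
  case 0 then show ?case using seq0 wlen_an[of 0] wlen_bn[of 0] by simp
next
  case (Suc n)
  have r: "wlen (an (Suc n)) = wlen (an n) + wlen (bn n) - (if n mod 3 = 2 then 2 else 0)"
          "wlen (bn (Suc n)) = wlen (an n) + wlen (bn n)" using rec_len[of n] by auto
  have l2: "n mod 3 = 2 \<Longrightarrow> wlen (an n) + wlen (bn n) \<ge> 2" using G_all[of n] by (simp add: wlen_an wlen_bn)
  consider "n mod 3 = 0" | "n mod 3 = 1" | "n mod 3 = 2" by linarith
  then show ?case
  proof cases
    case 1
    have s: "Suc n mod 3 = 1" using 1 by (simp add: mod_Suc)
    show ?thesis using Suc.IH r 1 s by simp
  next
    case 2
    have s: "Suc n mod 3 = 2" using 2 by (simp add: mod_Suc)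
    show ?thesis using Suc.IH r 2 s by simp
  next
    case 3
    have s: "Suc n mod 3 = 0" using 3 by (simp add: mod_Suc)
    have "int (wlen (an (Suc n))) = int (wlen (an n)) + int (wlen (bn n)) - 2" using r l2 3 by simp
    then show ?thesis using Suc.IH r 3 s by simp
  qed
qed


theorem lemma2p2:
  shows "(\<forall>n>0.
     (n mod 3 = 0 \<longrightarrow>
        prefix [(B,True)] (an n) \<and> suffix [(B,True)] (an n) \<and>
        prefix [(A,False),(B,False)] (bn n) \<and> suffix [(B,False),(A,True)] (bn n)) \<and>
     (n mod 3 = 1 \<longrightarrow>
        prefix [(B,True)] (an n) \<and> suffix [(B,False),(A,True)] (an n) \<and>
        prefix [(B,False)] (bn n) \<and> suffix [(B,True),(A,True)] (bn n)) \<and>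
     (n mod 3 = 2 \<longrightarrow>
        prefix [(B,True)] (an n) \<and> suffix [(B,True),(A,True)] (an n) \<and>
        prefix [(A,False),(B,True)] (bn n) \<and> suffix [(B,True)] (bn n)))
   \<and> (\<forall>n. reduce (ginv (an n) @ ginv (bn n)) = ginv (an n) @ ginv (bn n))
   \<and> (\<forall>n. (reduce (an n @ bn n) \<noteq> an n @ bn n) \<longleftrightarrow> n mod 3 = 2)
   \<and> (\<forall>n. n mod 3 = 2 \<longrightarrow>
        last (an n) = (A,True) \<and> hd (bn n) = (A,False) \<and>
        reduce (an n @ bn n) = butlast (an n) @ tl (bn n))
   \<and> (\<forall>n. wlen (an (Suc n)) = wlen (an n) + wlen (bn n) - (if n mod 3 = 2 then 2 else 0)
          \<and> wlen (bn (Suc n)) = wlen (an n) + wlen (bn n))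
   \<and> (\<forall>n. 7 * int (wlen (an n)) =
          (if n mod 3 = 0 then 13 * 2^n - 6 else if n mod 3 = 1 then 13 * 2^n + 2 else 13 * 2^n + 4)
        \<and> 7 * int (wlen (bn n)) =
          (if n mod 3 = 0 then 13 * 2^n + 8 else if n mod 3 = 1 then 13 * 2^n + 2 else 13 * 2^n + 4))
   \<and> (\<exists>C::real. C > 0 \<and> (\<forall>n. real (wlen (an n)) \<le> C * 2^n))"
proof -
  have P1: "\<forall>n>0.
     (n mod 3 = 0 \<longrightarrow>
        prefix [(B,True)] (an n) \<and> suffix [(B,True)] (an n) \<and>
        prefix [(A,False),(B,False)] (bn n) \<and> suffix [(B,False),(A,True)] (bn n)) \<and>
     (n mod 3 = 1 \<longrightarrow>
        prefix [(B,True)] (an n) \<and> suffix [(B,False),(A,True)] (an n) \<and>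
        prefix [(B,False)] (bn n) \<and> suffix [(B,True),(A,True)] (bn n)) \<and>
     (n mod 3 = 2 \<longrightarrow>
        prefix [(B,True)] (an n) \<and> suffix [(B,True),(A,True)] (an n) \<and>
        prefix [(A,False),(B,True)] (bn n) \<and> suffix [(B,True)] (bn n))"
  proof (intro allI impI)
    fix n :: nat assume "n > 0"
    then have I: "Inv n" using Inv_all by simp
    show "(n mod 3 = 0 \<longrightarrow>
        prefix [(B,True)] (an n) \<and> suffix [(B,True)] (an n) \<and>
        prefix [(A,False),(B,False)] (bn n) \<and> suffix [(B,False),(A,True)] (bn n)) \<and>
     (n mod 3 = 1 \<longrightarrow>
        prefix [(B,True)] (an n) \<and> suffix [(B,False),(A,True)] (an n) \<and>
        prefix [(B,False)] (bn n) \<and> suffix [(B,True),(A,True)] (bn n)) \<and>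
     (n mod 3 = 2 \<longrightarrow>
        prefix [(B,True)] (an n) \<and> suffix [(B,True),(A,True)] (an n) \<and>
        prefix [(A,False),(B,True)] (bn n) \<and> suffix [(B,True)] (bn n))"
      using I unfolding Inv_def prefix_def suffix_def by fastforce
  qed
  have P2: "\<forall>n. reduce (ginv (an n) @ ginv (bn n)) = ginv (an n) @ ginv (bn n)"
    using G_all reduce_rd by blast
  have P4: "\<forall>n. n mod 3 = 2 \<longrightarrow>
        last (an n) = (A,True) \<and> hd (bn n) = (A,False) \<and>
        reduce (an n @ bn n) = butlast (an n) @ tl (bn n)"
    using G_all by (simp add: gmult_def)
  have P3: "\<forall>n. (reduce (an n @ bn n) \<noteq> an n @ bn n) \<longleftrightarrow> n mod 3 = 2"
  proof
    fix n :: nat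
    show "(reduce (an n @ bn n) \<noteq> an n @ bn n) \<longleftrightarrow> n mod 3 = 2"
    proof (cases "n mod 3 = 2")
      case True
      then have "reduce (an n @ bn n) = butlast (an n) @ tl (bn n)" "length (an n) \<ge> 2"
        using P4 G_all[of n] by auto
      then have "length (reduce (an n @ bn n)) \<noteq> length (an n @ bn n)" by simp
      then show ?thesis using True by metis
    next
      case False
      then show ?thesis using G_all[of n] reduce_rd by simp
    qed
  qed
  have P7: "\<exists>C::real. C > 0 \<and> (\<forall>n. real (wlen (an n)) \<le> C * 2^n)"
  proof (intro exI[of _ 3] conjI allI)
    fix n :: nat
    have "7 * int (wlen (an n)) \<le> 13 * 2^n + 4" using closed[of n] by auto
    also have "\<dots> \<le> 21 * 2^n" using one_le_power[of "2::int" n] by linarith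
    finally have "int (wlen (an n)) \<le> 3 * 2^n" by simp
    then have "real_of_int (int (wlen (an n))) \<le> real_of_int (3 * 2^n)" by (simp only: of_int_le_iff)
    then show "real (wlen (an n)) \<le> 3 * 2^n" by simp
  qed simp
  show ?thesis using P1 P2 P3 P4 P7 rec_len closed by blast
qed

end
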